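(* Under Assumption 1, let $c:[0,\infty)\to(0,\infty)$ and $s:[0,\infty)\to[0,\infty)$ be continuously differentiable, with $c(0)=c_0$ and $s(0)=s_0$, and let $\tilde\Phi$, $\tilde{\mathcal{D}}(t)$ and $\tilde{\mathbf{z}}^\star(t)=\arg\min_{\mathbf{x}\in\tilde{\mathcal{D}}(t)}\tilde\Phi(\mathbf{x},t)$ be as defined below. Let $\mathbf{x}_0\in\mathbb{R}^n$ be arbitrary and $$s_0=\begin{cases}0 & \text{if } \max_i f_i(\mathbf{x}_0,0)\le 0,\\ \max_i f_i(\mathbf{x}_0,0)+\varepsilon & \text{if } \max_i f_i(\mathbf{x}_0,0)>0,\end{cases}$$ for some $\varepsilon>0$. Let $\mathbf{P}\in\mathbb{S}^n_{++}$ with $\mathbf{P}\succeq\sigma\mathbf{I}_n$, $\sigma>0$, and let $\tilde{\mathbf{z}}(t)$ solve $$\dot{\tilde{\mathbf{z}}}(t)=-\nabla_{\mathbf{x}\mathbf{x}}\tilde\Phi(\tilde{\mathbf{z}}(t),t)^{-1}\big(\mathbf{P}\nabla_{\mathbf{x}}\tilde\Phi(\tilde{\mathbf{z}}(t),t)+\nabla_{\mathbf{x}t}\tilde\Phi(\tilde{\mathbf{z}}(t),t)\big),\qquad\tilde{\mathbf{z}}(0)=\mathbf{x}_0,$$ with $\tilde{\mathbf{z}}(t)\in\tilde{\mathcal{D}}(t)$ for all $t\ge0$. Then there is $0\le C(\mathbf{x}_0,c_0,s_0,m)<\infty$ such that $$\|\tilde{\mathbf{z}}(t)-\tilde{\mathbf{z}}^\star(t)\|_2\le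 C(\mathbf{x}_0,c_0,s_0,m)\,e^{-\sigma t}\quad\text{for all }t\ge0.$$
   Context: Assumption 1: $f_0(\mathbf{x},t)$ and $f_i(\mathbf{x},t)$, $i=1,\dots,p$, are twice continuously differentiable in $\mathbf{x}$ and continuously differentiable in $t$ for $t\ge0$; $\nabla_{\mathbf{x}\mathbf{x}} f_0(\mathbf{x},t)\succeq m\mathbf{I}$ for some $m>0$; each $f_i(\cdot,t)$ is convex for all $t\ge0$. Perturbed barrier: $\tilde\Phi(\mathbf{x},t)=f_0(\mathbf{x},t)-\frac{1}{c(t)}\sum_{i=1}^p\log(s(t)-f_i(\mathbf{x},t))$ on $\tilde{\mathcal{D}}(t)=\{\mathbf{x}: f_i(\mathbf{x},t)<s(t),\ i=1,\dots,p\}$. $\nabla_{\mathbf{x}}$, $\nabla_{\mathbf{x}\mathbf{x}}$ denote gradient and Hessian in $\mathbf{x}$; $\nabla_{\mathbf{x}t}\tilde\Phi$ is the partial time derivative of $\nabla_{\mathbf{x}}\tilde\Phi$. *)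

theory Defs
  imports "HOL-Analysis.Analysis"
begin

definition xgrad :: "(real^'n \<Rightarrow> real) \<Rightarrow> real^'n \<Rightarrow> real^'n" where
  "xgrad g x = (\<chi> i. frechet_derivative g (at x) (axis i 1))"

definition xhess :: "(real^'n \<Rightarrow> real) \<Rightarrow> real^'n \<Rightarrow> real^'n^'n" where
  "xhess g x = (\<chi> i j. frechet_derivative (\<lambda>y. xgrad g y $ i) (at x) (axis j 1))"

definition grad_xt :: "(real^'n \<Rightarrow> real \<Rightarrow> real) \<Rightarrow> real^'n \<Rightarrow> real \<Rightarrow> real^'n" where
  "grad_xt F x t = vector_derivative (\<lambda>\<tau>. xgrad (\<lambda>y. F y \<tau>) x) (at t within {0..})"

definition tderiv :: "(real^'n \<Rightarrow> real \<Rightarrow> real) \<Rightarrow> real^'n \<Rightarrow> real \<Rightarrow> real" where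
  "tderiv F x t = vector_derivative (\<lambda>\<tau>. F x \<tau>) (at t within {0..})"

text \<open>Smoothness part of Assumption 1: twice continuously differentiable in x, continuously
  differentiable in t (t \<ge> 0), with all the partial derivatives involved (including the mixed
  derivative of the gradient, which the ODE uses) existing and jointly continuous in (x,t).\<close>
definition tv_smooth :: "(real^'n \<Rightarrow> real \<Rightarrow> real) \<Rightarrow> bool" where
  "tv_smooth F \<longleftrightarrow>
     (\<forall>t\<ge>0. \<forall>x. (\<lambda>y. F y t) differentiable (at x)) \<and>
     (\<forall>t\<ge>0. \<forall>x. (\<lambda>y. xgrad (\<lambda>z. F z t) y) differentiable (at x)) \<and>
     (\<forall>x. \<forall>t\<ge>0. (\<lambda>\<tau>. F x \<tau>) differentiable (at t within {0..})) \<and>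
     (\<forall>x. \<forall>t\<ge>0. (\<lambda>\<tau>. xgrad (\<lambda>y. F y \<tau>) x) differentiable (at t within {0..})) \<and>
     continuous_on (UNIV \<times> {0..}) (\<lambda>xt. F (fst xt) (snd xt)) \<and>
     continuous_on (UNIV \<times> {0..}) (\<lambda>xt. xgrad (\<lambda>y. F y (snd xt)) (fst xt)) \<and>
     continuous_on (UNIV \<times> {0..}) (\<lambda>xt. xhess (\<lambda>y. F y (snd xt)) (fst xt)) \<and>
     continuous_on (UNIV \<times> {0..}) (\<lambda>xt. tderiv F (fst xt) (snd xt)) \<and>
     continuous_on (UNIV \<times> {0..}) (\<lambda>xt. grad_xt F (fst xt) (snd xt))"

definition Phi_tilde ::
  "(real^'n \<Rightarrow> real \<Rightarrow> real) \<Rightarrow> (nat \<Rightarrow> real^'n \<Rightarrow> real \<Rightarrow> real) \<Rightarrow> nat \<Rightarrow>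
   (real \<Rightarrow> real) \<Rightarrow> (real \<Rightarrow> real) \<Rightarrow> real^'n \<Rightarrow> real \<Rightarrow> real" where
  "Phi_tilde f0 f p c s x t = f0 x t - (1 / c t) * (\<Sum>i=1..p. ln (s t - f i x t))"

definition D_tilde ::
  "(nat \<Rightarrow> real^'n \<Rightarrow> real \<Rightarrow> real) \<Rightarrow> nat \<Rightarrow> (real \<Rightarrow> real) \<Rightarrow> real \<Rightarrow> (real^'n) set" where
  "D_tilde f p s t = {x. \<forall>i\<in>{1..p}. f i x t < s t}"

definition z_star ::
  "(real^'n \<Rightarrow> real \<Rightarrow> real) \<Rightarrow> (nat \<Rightarrow> real^'n \<Rightarrow> real \<Rightarrow> real) \<Rightarrow> nat \<Rightarrow>
   (real \<Rightarrow> real) \<Rightarrow> (real \<Rightarrow> real) \<Rightarrow> real \<Rightarrow> real^'n" where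
  "z_star f0 f p c s t = arg_min_on (\<lambda>x. Phi_tilde f0 f p c s x t) (D_tilde f p s t)"

end

theory Submission
  imports Defs
begin


lemma lin_expand:
  fixes L :: "real^'n \<Rightarrow> 'b::real_vector"
  assumes "linear L"
  shows "L v = (\<Sum>j\<in>UNIV. v$j *\<^sub>R L (axis j 1))"
proof -
  have "L v = L (\<Sum>j\<in>UNIV. (v$j) *s axis j 1)" by (simp add: basis_expansion)
  also have "\<dots> = (\<Sum>j\<in>UNIV. v$j *\<^sub>R L (axis j 1))"
    using assms by (simp add: linear_sum linear_scale scalar_mult_eq_scaleR)
  finally show ?thesis .
qed

lemma xgrad_eq:
  assumes "(f has_derivative f') (at x)"
  shows "xgrad f x = (\<chi> i. f' (axis i 1))"
  using frechet_derivative_at[OF assms] by (simp add: xgrad_def)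

lemma xgrad_inner:
  assumes "(f has_derivative f') (at x)"
  shows "xgrad f x \<bullet> v = f' v"
proof -
  have lin: "linear f'" using assms has_derivative_linear by blast
  show ?thesis
    unfolding xgrad_eq[OF assms] lin_expand[OF lin, of v]
    by (simp add: inner_vec_def mult.commute)
qed

lemma xhess_mult:
  assumes "((\<lambda>y. xgrad f y) has_derivative L) (at x)"
  shows "xhess f x *v v = L v"
proof -
  have lin: "linear L" using assms has_derivative_linear by blast
  have c: "((\<lambda>y. xgrad f y $ i) has_derivative (\<lambda>v. L v $ i)) (at x)" for i
    using bounded_linear.has_derivative[OF bounded_linear_vec_nth assms] .
  have "xhess f x = (\<chi> i j. L (axis j 1) $ i)"
  proof -
    have "frechet_derivative (\<lambda>y. xgrad f y $ i) (at x) = (\<lambda>v. L v $ i)" for i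
      using frechet_derivative_at[OF c, of i] by simp
    then show ?thesis by (simp add: xhess_def)
  qed
  then show ?thesis
    apply (simp add: matrix_vector_mult_def vec_eq_iff)
    apply (subst lin_expand[OF lin, of v])
    by (simp add: mult.commute)
qed




lemma joint_deriv:
  fixes f :: "real^'n \<Rightarrow> real \<Rightarrow> 'b::real_normed_vector"
  assumes fx: "((\<lambda>y. f y t) has_derivative A) (at x)"
    and fy: "\<forall>y. \<forall>\<tau>\<ge>0. ((\<lambda>\<tau>. f y \<tau>) has_vector_derivative D y \<tau>) (at \<tau> within {0..})"
    and cD: "continuous_on (UNIV \<times> {0..}) (\<lambda>w. D (fst w) (snd w))"
    and t: "t \<ge> 0"
  shows "((\<lambda>w. f (fst w) (snd w)) has_derivative (\<lambda>w. A (fst w) + snd w *\<^sub>R D x t))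
           (at (x,t) within UNIV \<times> {0..})"
proof -
  have 1: "((\<lambda>(x, y). f x y) has_derivative (\<lambda>(tx, ty). A tx + blinfun_scaleR_left (D x t) ty))
           (at (x, t) within UNIV \<times> {0..})"
  proof (rule has_derivative_partialsI)
    show "((\<lambda>x. f x t) has_derivative A) (at x within UNIV)" using fx by simp
    show "((\<lambda>y. f x' y) has_derivative blinfun_apply (blinfun_scaleR_left (D x' y))) (at y within {0..})"
      if "x' \<in> UNIV" "y \<in> {0..}" for x' y
      using fy that by (simp add: has_vector_derivative_def)
    have "continuous_on (UNIV \<times> {0..}) (\<lambda>w. blinfun_scaleR_left (D (fst w) (snd w)))"
    proof -
      have "continuous_on (UNIV \<times> {0..}) (blinfun_scaleR_left o (\<lambda>w. D (fst w) (snd w)))"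
        by (intro continuous_on_compose cD linear_continuous_on bounded_linear_blinfun_scaleR_left)
      then show ?thesis by (simp add: o_def)
    qed
    then have "continuous (at (x, t) within UNIV \<times> {0..}) (\<lambda>w. blinfun_scaleR_left (D (fst w) (snd w)))"
      using t by (simp add: continuous_on_eq_continuous_within)
    then show "continuous (at (x, t) within UNIV \<times> {0..}) (\<lambda>(x, y). blinfun_scaleR_left (D x y))"
      by (simp add: split_beta')
  qed (use t in auto)
  show ?thesis using 1 by (simp add: split_beta' case_prod_beta)
qed

lemma tv_joint:
  assumes sm: "tv_smooth F" and t: "t \<ge> 0"
  shows "((\<lambda>w. F (fst w) (snd w)) has_derivative
           (\<lambda>w. xgrad (\<lambda>y. F y t) x \<bullet> fst w + snd w * tderiv F x t)) (at (x,t) within UNIV \<times> {0..})"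
    and "((\<lambda>w. xgrad (\<lambda>y. F y (snd w)) (fst w)) has_derivative
           (\<lambda>w. xhess (\<lambda>y. F y t) x *v fst w + snd w *\<^sub>R grad_xt F x t)) (at (x,t) within UNIV \<times> {0..})"
proof -
  from sm have d1: "(\<lambda>y. F y t) differentiable (at x)"
    and d2: "(\<lambda>y. xgrad (\<lambda>z. F z t) y) differentiable (at x)"
    and d3: "\<forall>y. \<forall>\<tau>\<ge>0. ((\<lambda>\<tau>. F y \<tau>) has_vector_derivative tderiv F y \<tau>) (at \<tau> within {0..})"
    and d4: "\<forall>y. \<forall>\<tau>\<ge>0. ((\<lambda>\<tau>. xgrad (\<lambda>z. F z \<tau>) y) has_vector_derivative grad_xt F y \<tau>) (at \<tau> within {0..})"
    and c3: "continuous_on (UNIV \<times> {0..}) (\<lambda>xt. tderiv F (fst xt) (snd xt))"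
    and c4: "continuous_on (UNIV \<times> {0..}) (\<lambda>xt. grad_xt F (fst xt) (snd xt))"
    using t unfolding tv_smooth_def tderiv_def grad_xt_def
    by (auto simp: vector_derivative_works[symmetric])
  obtain A where A: "((\<lambda>y. F y t) has_derivative A) (at x)" using d1 by (auto simp: differentiable_def)
  obtain B where B: "((\<lambda>y. xgrad (\<lambda>z. F z t) y) has_derivative B) (at x)" using d2 by (auto simp: differentiable_def)
  have "((\<lambda>w. F (fst w) (snd w)) has_derivative (\<lambda>w. A (fst w) + snd w *\<^sub>R tderiv F x t))
           (at (x,t) within UNIV \<times> {0..})"
    by (rule joint_deriv[OF A d3 c3 t])
  then show "((\<lambda>w. F (fst w) (snd w)) has_derivative
           (\<lambda>w. xgrad (\<lambda>y. F y t) x \<bullet> fst w + snd w * tderiv F x t)) (at (x,t) within UNIV \<times> {0..})"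
    using xgrad_inner[OF A] by simp
  have "((\<lambda>w. xgrad (\<lambda>y. F y (snd w)) (fst w)) has_derivative (\<lambda>w. B (fst w) + snd w *\<^sub>R grad_xt F x t))
           (at (x,t) within UNIV \<times> {0..})"
    by (rule joint_deriv[where f="\<lambda>y \<tau>. xgrad (\<lambda>z. F z \<tau>) y", OF B d4 c4 t])
  then show "((\<lambda>w. xgrad (\<lambda>y. F y (snd w)) (fst w)) has_derivative
           (\<lambda>w. xhess (\<lambda>y. F y t) x *v fst w + snd w *\<^sub>R grad_xt F x t)) (at (x,t) within UNIV \<times> {0..})"
    using xhess_mult[OF B] by simp
qed




lemma line_deriv:
  fixes f :: "real^'n \<Rightarrow> real"
  assumes "(f has_derivative (\<lambda>h. gr \<bullet> h)) (at (x + r *\<^sub>R v))"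
  shows "((\<lambda>r. f (x + r *\<^sub>R v)) has_real_derivative (gr \<bullet> v)) (at r)"
proof -
  have "((\<lambda>r. x + r *\<^sub>R v) has_derivative (\<lambda>k. k *\<^sub>R v)) (at r)"
    by (auto intro!: derivative_eq_intros)
  from has_derivative_compose[OF this assms] show ?thesis
    unfolding has_field_derivative_def
    by (rule has_derivative_eq_rhs) (simp add: fun_eq_iff mult.commute inner_scaleR_right)
qed

lemma line_deriv_vec:
  fixes g :: "real^'n \<Rightarrow> real^'n"
  assumes "(g has_derivative L) (at (x + r *\<^sub>R v))"
  shows "((\<lambda>r. g (x + r *\<^sub>R v) \<bullet> w) has_real_derivative (L v \<bullet> w)) (at r)"
proof -
  have lin: "linear L" using assms has_derivative_linear by blast
  have "((\<lambda>r. x + r *\<^sub>R v) has_derivative (\<lambda>k. k *\<^sub>R v)) (at r)"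
    by (auto intro!: derivative_eq_intros)
  from has_derivative_compose[OF this assms]
  have "((\<lambda>r. g (x + r *\<^sub>R v)) has_derivative (\<lambda>k. L (k *\<^sub>R v))) (at r)" .
  then have "((\<lambda>r. g (x + r *\<^sub>R v) \<bullet> w) has_derivative (\<lambda>k. L (k *\<^sub>R v) \<bullet> w)) (at r)"
    by (auto intro!: derivative_eq_intros)
  then show ?thesis
    unfolding has_field_derivative_def
    by (rule has_derivative_eq_rhs) (simp add: fun_eq_iff linear_scale[OF lin] mult.commute)
qed

lemma convex_line:
  fixes f :: "real^'n \<Rightarrow> real"
  assumes "convex_on UNIV f"
  shows "convex_on UNIV (\<lambda>r. f (x + r *\<^sub>R v))"
proof (rule convex_onI)
  fix u a b :: real assume u: "0 < u" "u < 1"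
  have "x + ((1 - u) *\<^sub>R a + u *\<^sub>R b) *\<^sub>R v = (1 - u) *\<^sub>R (x + a *\<^sub>R v) + u *\<^sub>R (x + b *\<^sub>R v)"
    by (simp add: algebra_simps)
  then show "f (x + ((1 - u) *\<^sub>R a + u *\<^sub>R b) *\<^sub>R v) \<le> (1 - u) * f (x + a *\<^sub>R v) + u * f (x + b *\<^sub>R v)"
    using convex_onD[OF assms, of u] u by simp
qed auto

lemma convex_tangent:
  fixes f :: "real^'n \<Rightarrow> real"
  assumes cv: "convex_on UNIV f" and d: "\<And>y. (f has_derivative (\<lambda>h. gr y \<bullet> h)) (at y)"
  shows "f (x + a *\<^sub>R v) + gr (x + a *\<^sub>R v) \<bullet> v * (b - a) \<le> f (x + b *\<^sub>R v)"
proof -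
  have "gr (x + a *\<^sub>R v) \<bullet> v * (b - a) \<le> f (x + b *\<^sub>R v) - f (x + a *\<^sub>R v)"
    by (rule convex_on_imp_above_tangent[OF convex_line[OF cv]]) (auto intro: line_deriv[OF d])
  then show ?thesis by simp
qed

lemma convex_tangent2:
  fixes f :: "real^'n \<Rightarrow> real"
  assumes cv: "convex_on UNIV f" and d: "\<And>y. (f has_derivative (\<lambda>h. gr y \<bullet> h)) (at y)"
  shows "f x + gr x \<bullet> (y - x) \<le> f y"
  using convex_tangent[OF cv d, of x 0 "y - x" 1] by simp

lemma convex_psd:
  fixes f :: "real^'n \<Rightarrow> real"
  assumes cv: "convex_on UNIV f" and d: "\<And>y. (f has_derivative (\<lambda>h. gr y \<bullet> h)) (at y)"
    and dd: "(gr has_derivative L) (at x)"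
  shows "0 \<le> L v \<bullet> v"
proof (rule ccontr)
  assume neg: "\<not> 0 \<le> L v \<bullet> v"
  have D: "((\<lambda>r. gr (x + r *\<^sub>R v) \<bullet> v) has_real_derivative (L v \<bullet> v)) (at 0)"
    using line_deriv_vec[of gr L x 0 v v] dd by simp
  obtain e where e: "e > 0" "\<And>h. h > 0 \<Longrightarrow> h < e \<Longrightarrow> gr (x + (0 + h) *\<^sub>R v) \<bullet> v < gr (x + 0 *\<^sub>R v) \<bullet> v"
    using DERIV_neg_dec_right[OF D] neg by force
  define h where "h = e / 2"
  have h: "h > 0" "h < e" using e by (auto simp: h_def)
  have 1: "f (x + 0 *\<^sub>R v) + gr (x + 0 *\<^sub>R v) \<bullet> v * (h - 0) \<le> f (x + h *\<^sub>R v)"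
    by (rule convex_tangent[OF cv d])
  have 2: "f (x + h *\<^sub>R v) + gr (x + h *\<^sub>R v) \<bullet> v * (0 - h) \<le> f (x + 0 *\<^sub>R v)"
    by (rule convex_tangent[OF cv d])
  have "gr (x + h *\<^sub>R v) \<bullet> v < gr x \<bullet> v" using e(2)[OF h] by simp
  then have "gr (x + h *\<^sub>R v) \<bullet> v * h < gr x \<bullet> v * h" using h by simp
  then show False using 1 2 by simp
qed

lemma strong_lower:
  fixes f :: "real^'n \<Rightarrow> real"
  assumes d: "\<And>y. (f has_derivative (\<lambda>h. gr y \<bullet> h)) (at y)"
    and dd: "\<And>y. (gr has_derivative L y) (at y)"
    and pd: "\<And>y. m * (norm v)\<^sup>2 \<le> L y v \<bullet> v"
  shows "f x + gr x \<bullet> v + m / 2 * (norm v)\<^sup>2 \<le> f (x + v)"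
proof -
  define \<psi> where "\<psi> r = gr (x + r *\<^sub>R v) \<bullet> v - gr x \<bullet> v - m * (norm v)\<^sup>2 * r" for r
  define \<phi> where "\<phi> r = f (x + r *\<^sub>R v) - r * (gr x \<bullet> v) - m / 2 * (norm v)\<^sup>2 * r\<^sup>2" for r
  have dpsi: "(\<psi> has_real_derivative (L (x + r *\<^sub>R v) v \<bullet> v - m * (norm v)\<^sup>2)) (at r)" for r
    unfolding \<psi>_def
    by (auto intro!: derivative_eq_intros line_deriv_vec[OF dd])
  have psi_nn: "0 \<le> \<psi> r" if "0 \<le> r" for r
  proof -
    have "\<psi> 0 \<le> \<psi> r"
    proof (rule DERIV_nonneg_imp_nondecreasing[OF that])
      fix y show "\<exists>l. (\<psi> has_real_derivative l) (at y) \<and> 0 \<le> l"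
        by (rule exI, rule conjI[OF dpsi]) (use pd in auto)
    qed
    then show ?thesis by (simp add: \<psi>_def)
  qed
  have dphi: "(\<phi> has_real_derivative \<psi> r) (at r)" for r
    unfolding \<phi>_def \<psi>_def
    by (auto intro!: derivative_eq_intros line_deriv[OF d] simp: power2_eq_square algebra_simps)
  have "\<phi> 0 \<le> \<phi> 1"
    by (rule DERIV_nonneg_imp_nondecreasing[of 0 1]) (use dphi psi_nn in auto)
  then show ?thesis by (simp add: \<phi>_def)
qed




lemma tv_dx:
  assumes "tv_smooth F" "t \<ge> 0"
  shows "((\<lambda>y. F y t) has_derivative (\<lambda>h. xgrad (\<lambda>y. F y t) x \<bullet> h)) (at x)"
proof -
  obtain A where A: "((\<lambda>y. F y t) has_derivative A) (at x)"
    using assms unfolding tv_smooth_def differentiable_def by blast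
  have "A = (\<lambda>h. xgrad (\<lambda>y. F y t) x \<bullet> h)" using xgrad_inner[OF A] by (auto simp: fun_eq_iff)
  then show ?thesis using A by simp
qed

lemma tv_dxx:
  assumes "tv_smooth F" "t \<ge> 0"
  shows "((\<lambda>y. xgrad (\<lambda>z. F z t) y) has_derivative (\<lambda>h. xhess (\<lambda>y. F y t) x *v h)) (at x)"
proof -
  obtain A where A: "((\<lambda>y. xgrad (\<lambda>z. F z t) y) has_derivative A) (at x)"
    using assms unfolding tv_smooth_def differentiable_def by blast
  have "A = (\<lambda>h. xhess (\<lambda>y. F y t) x *v h)" using xhess_mult[OF A] by (auto simp: fun_eq_iff)
  then show ?thesis using A by simp
qed

locale setting =
  fixes f0 :: "real^'n \<Rightarrow> real \<Rightarrow> real"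
    and f :: "nat \<Rightarrow> real^'n \<Rightarrow> real \<Rightarrow> real"
    and p :: nat and m :: real
    and c s c' s' :: "real \<Rightarrow> real"
  assumes sm0: "tv_smooth f0"
    and smi: "\<forall>i\<in>{1..p}. tv_smooth (f i)"
    and mpos: "m > 0"
    and strong: "\<forall>t\<ge>0. \<forall>x v. v \<bullet> (xhess (\<lambda>y. f0 y t) x *v v) \<ge> m * (norm v)\<^sup>2"
    and conv: "\<forall>i\<in>{1..p}. \<forall>t\<ge>0. convex_on UNIV (\<lambda>x. f i x t)"
    and cpos: "\<forall>t\<ge>0. c t > 0"
    and cder: "\<forall>t\<ge>0. (c has_real_derivative c' t) (at t within {0..})"
    and sder: "\<forall>t\<ge>0. (s has_real_derivative s' t) (at t within {0..})"
begin

definition "gr i t x = xgrad (\<lambda>y. f i y t) x"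
definition "g0 t x = xgrad (\<lambda>y. f0 y t) x"

definition Gf where
  "Gf x t = g0 t x + (1 / c t) *\<^sub>R (\<Sum>i=1..p. (1 / (s t - f i x t)) *\<^sub>R gr i t x)"

definition Hx where
  "Hx t x h = xhess (\<lambda>y. f0 y t) x *v h + (1 / c t) *\<^sub>R (\<Sum>i=1..p.
      (1 / (s t - f i x t)) *\<^sub>R (xhess (\<lambda>y. f i y t) x *v h)
      + ((gr i t x \<bullet> h) / (s t - f i x t)\<^sup>2) *\<^sub>R gr i t x)"

lemma Phi_dx:
  assumes t: "t \<ge> 0" and x: "x \<in> D_tilde f p s t"
  shows "((\<lambda>y. Phi_tilde f0 f p c s y t) has_derivative (\<lambda>h. Gf x t \<bullet> h)) (at x)"
proof -
  have df0: "((\<lambda>y. f0 y t) has_derivative (\<lambda>h. g0 t x \<bullet> h)) (at x)"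
    unfolding g0_def by (rule tv_dx[OF sm0 t])
  have dfi: "((\<lambda>y. f i y t) has_derivative (\<lambda>h. gr i t x \<bullet> h)) (at x)" if "i \<in> {1..p}" for i
    unfolding gr_def using smi that t by (intro tv_dx) auto
  have pos: "s t - f i x t > 0" if "i \<in> {1..p}" for i
    using x that by (auto simp: D_tilde_def)
  have "((\<lambda>y. Phi_tilde f0 f p c s y t) has_derivative
     (\<lambda>h. g0 t x \<bullet> h - 1 / c t * (\<Sum>i=1..p. (0 - gr i t x \<bullet> h) * inverse (s t - f i x t)))) (at x)"
    unfolding Phi_tilde_def
    by (intro derivative_intros df0 dfi DERIV_ln[THEN DERIV_compose_FDERIV] pos) auto
  then show ?thesis
    by (rule has_derivative_eq_rhs)
      (simp add: fun_eq_iff Gf_def inner_add_left inner_sum_left sum_distrib_left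
         sum_negf[symmetric] divide_inverse mult_ac)
qed

lemma pos_D: "x \<in> D_tilde f p s t \<Longrightarrow> i \<in> {1..p} \<Longrightarrow> s t - f i x t > 0"
  by (auto simp: D_tilde_def)

lemma Gf_dx:
  assumes t: "t \<ge> 0" and x: "x \<in> D_tilde f p s t"
  shows "((\<lambda>y. Gf y t) has_derivative Hx t x) (at x)"
proof -
  have dh0: "((\<lambda>y. g0 t y) has_derivative (\<lambda>h. xhess (\<lambda>y. f0 y t) x *v h)) (at x)"
    unfolding g0_def by (rule tv_dxx[OF sm0 t])
  have dhi: "((\<lambda>y. gr i t y) has_derivative (\<lambda>h. xhess (\<lambda>y. f i y t) x *v h)) (at x)" if "i \<in> {1..p}" for i
    unfolding gr_def using smi that t by (intro tv_dxx) auto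
  have dfi: "((\<lambda>y. f i y t) has_derivative (\<lambda>h. gr i t x \<bullet> h)) (at x)" if "i \<in> {1..p}" for i
    unfolding gr_def using smi that t by (intro tv_dx) auto
  show ?thesis
  proof -
    have dterm: "((\<lambda>y. (1 / (s t - f i y t)) *\<^sub>R gr i t y) has_derivative
      (\<lambda>h. (1 / (s t - f i x t)) *\<^sub>R (xhess (\<lambda>y. f i y t) x *v h)
      + ((gr i t x \<bullet> h) / (s t - f i x t)\<^sup>2) *\<^sub>R gr i t x)) (at x)" if i: "i \<in> {1..p}" for i
    proof -
      have ds: "((\<lambda>y. s t - f i y t) has_derivative (\<lambda>h. 0 - gr i t x \<bullet> h)) (at x)"
        by (intro has_derivative_diff has_derivative_const dfi[OF i])
      have dq: "((\<lambda>y. 1 / (s t - f i y t)) has_derivative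
                (\<lambda>h. ((gr i t x \<bullet> h) / (s t - f i x t)\<^sup>2))) (at x)"
        using has_derivative_divide[OF has_derivative_const ds, of 1] pos_D[OF x i]
        by (rule_tac has_derivative_eq_rhs) (auto simp: fun_eq_iff field_simps power2_eq_square)
      show ?thesis
        using has_derivative_scaleR[OF dq dhi[OF i]] by (simp add: add.commute)
    qed
    have "((\<lambda>y. g0 t y + (1 / c t) *\<^sub>R (\<Sum>i=1..p. (1 / (s t - f i y t)) *\<^sub>R gr i t y)) has_derivative
       (\<lambda>h. xhess (\<lambda>y. f0 y t) x *v h + (1 / c t) *\<^sub>R (\<Sum>i=1..p.
        (1 / (s t - f i x t)) *\<^sub>R (xhess (\<lambda>y. f i y t) x *v h)
      + ((gr i t x \<bullet> h) / (s t - f i x t)\<^sup>2) *\<^sub>R gr i t x))) (at x)"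
      by (intro has_derivative_add dh0 has_derivative_scaleR_right has_derivative_sum dterm) auto
    then show ?thesis unfolding Gf_def Hx_def[abs_def] .
  qed
qed


lemma D_eq: "D_tilde f p s t = (\<Inter>i\<in>{1..p}. {x. f i x t < s t})"
  by (auto simp: D_tilde_def)

lemma fi_cont: "i \<in> {1..p} \<Longrightarrow> t \<ge> 0 \<Longrightarrow> continuous_on UNIV (\<lambda>x. f i x t)"
  using smi by (intro differentiable_imp_continuous_on) (auto simp: tv_smooth_def differentiable_on_def intro: differentiable_at_withinI)

lemma D_open: "t \<ge> 0 \<Longrightarrow> open (D_tilde f p s t)"
  unfolding D_eq by (intro open_INT ballI open_Collect_less fi_cont continuous_on_const) auto

lemma D_convex: "t \<ge> 0 \<Longrightarrow> convex (D_tilde f p s t)"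
  unfolding D_eq
proof (intro convex_INT)
  fix i assume i: "i \<in> {1..p}" and t: "t \<ge> 0"
  have cv: "convex_on UNIV (\<lambda>x. f i x t)" using conv i t by auto
  show "convex {x. f i x t < s t}"
  proof (rule convexI)
    fix a b :: "real^'n" and u v :: real
    assume a: "a \<in> {x. f i x t < s t}" and b: "b \<in> {x. f i x t < s t}" and uv: "0 \<le> u" "0 \<le> v" "u + v = 1"
    have "f i (u *\<^sub>R a + v *\<^sub>R b) t \<le> u * f i a t + v * f i b t"
      using convex_onD[OF cv, of v a b] uv by (simp add: eq_diff_eq[symmetric])
    also have "\<dots> < s t"
    proof -
      have "u * f i a t \<le> u * s t" "v * f i b t \<le> v * s t"
        using a b uv by (auto intro!: mult_left_mono)
      moreover have "u * f i a t < u * s t \<or> v * f i b t < v * s t"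
        using a b uv by (cases "u = 0") auto
      ultimately have "u * f i a t + v * f i b t < u * s t + v * s t" by linarith
      also have "\<dots> = s t" using uv by (simp add: distrib_right[symmetric])
      finally show ?thesis .
    qed
    finally show "u *\<^sub>R a + v *\<^sub>R b \<in> {x. f i x t < s t}" by simp
  qed
qed

lemma xgrad_Phi:
  assumes "t \<ge> 0" "x \<in> D_tilde f p s t"
  shows "xgrad (\<lambda>y. Phi_tilde f0 f p c s y t) x = Gf x t"
  using xgrad_eq[OF Phi_dx[OF assms]] by (simp add: vec_eq_iff inner_axis)

lemma xhess_Phi:
  assumes t: "t \<ge> 0" and x: "x \<in> D_tilde f p s t"
  shows "xhess (\<lambda>y. Phi_tilde f0 f p c s y t) x *v h = Hx t x h"
proof -
  have "((\<lambda>y. xgrad (\<lambda>y. Phi_tilde f0 f p c s y t) y) has_derivative Hx t x) (at x)"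
    by (rule has_derivative_transform_within_open[OF Gf_dx[OF t x] D_open[OF t] x])
       (simp add: xgrad_Phi[OF t])
  then show ?thesis by (rule xhess_mult)
qed

lemma Hi_psd:
  assumes i: "i \<in> {1..p}" and t: "t \<ge> 0"
  shows "0 \<le> v \<bullet> (xhess (\<lambda>y. f i y t) x *v v)"
proof -
  have sm: "tv_smooth (f i)" using smi i by auto
  have "0 \<le> (xhess (\<lambda>y. f i y t) x *v v) \<bullet> v"
    by (rule convex_psd[where f="\<lambda>y. f i y t" and gr="\<lambda>y. xgrad (\<lambda>y. f i y t) y"])
       (use conv i t tv_dx[OF sm t] tv_dxx[OF sm t] in auto)
  then show ?thesis by (simp add: inner_commute)
qed

lemma Hx_pd:
  assumes t: "t \<ge> 0" and x: "x \<in> D_tilde f p s t"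
  shows "m * (norm v)\<^sup>2 \<le> v \<bullet> Hx t x v"
proof -
  have "0 \<le> (\<Sum>i=1..p. (1 / (s t - f i x t)) * (v \<bullet> (xhess (\<lambda>y. f i y t) x *v v))
           + ((gr i t x \<bullet> v) / (s t - f i x t)\<^sup>2) * (gr i t x \<bullet> v))"
  proof (intro sum_nonneg)
    fix i assume i: "i \<in> {1..p}"
    have "0 \<le> (1 / (s t - f i x t)) * (v \<bullet> (xhess (\<lambda>y. f i y t) x *v v))"
      using pos_D[OF x i] Hi_psd[OF i t] by simp
    moreover have "0 \<le> ((gr i t x \<bullet> v) / (s t - f i x t)\<^sup>2) * (gr i t x \<bullet> v)"
      by (simp add: power2_eq_square[symmetric] mult.commute[of _ "gr i t x \<bullet> v"] divide_inverse mult.assoc[symmetric])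
    ultimately show "0 \<le> (1 / (s t - f i x t)) * (v \<bullet> (xhess (\<lambda>y. f i y t) x *v v))
           + ((gr i t x \<bullet> v) / (s t - f i x t)\<^sup>2) * (gr i t x \<bullet> v)" by linarith
  qed
  moreover have "0 < 1 / c t" using cpos t by auto
  ultimately have "0 \<le> (1 / c t) * (\<Sum>i=1..p. (1 / (s t - f i x t)) * (v \<bullet> (xhess (\<lambda>y. f i y t) x *v v))
           + ((gr i t x \<bullet> v) / (s t - f i x t)\<^sup>2) * (gr i t x \<bullet> v))" by simp
  moreover have "v \<bullet> Hx t x v = v \<bullet> (xhess (\<lambda>y. f0 y t) x *v v) + (1 / c t) * (\<Sum>i=1..p. (1 / (s t - f i x t)) * (v \<bullet> (xhess (\<lambda>y. f i y t) x *v v))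
           + ((gr i t x \<bullet> v) / (s t - f i x t)\<^sup>2) * (gr i t x \<bullet> v))"
    by (simp add: Hx_def inner_add_right inner_sum_right inner_commute[of v "gr _ _ _"])
  moreover have "m * (norm v)\<^sup>2 \<le> v \<bullet> (xhess (\<lambda>y. f0 y t) x *v v)" using strong t by auto
  ultimately show ?thesis by linarith
qed


lemma scalar_joint:
  assumes "\<forall>t\<ge>0. (g has_real_derivative g' t) (at t within {0..})" and t: "t \<ge> 0"
  shows "((\<lambda>w. g (snd w)) has_derivative (\<lambda>w. snd w * g' t)) (at (x, t) within UNIV \<times> {0..})"
proof -
  have "((\<lambda>w. g (snd w)) has_derivative (\<lambda>w. (\<lambda>k. k * g' (snd (x,t))) (snd w))) (at (x, t) within UNIV \<times> {0..})"
  proof (rule has_derivative_in_compose2[where t="{0..}" and g=g and g'="\<lambda>\<tau> k. k * g' \<tau>" and f=snd and f'=snd])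
    show "\<And>xa. xa \<in> {0..} \<Longrightarrow> (g has_derivative (\<lambda>k. k * g' xa)) (at xa within {0..})"
    proof -
      fix xa :: real assume "xa \<in> {0..}"
      then have "(g has_derivative (*) (g' xa)) (at xa within {0..})"
        using assms(1) by (auto simp: has_field_derivative_def)
      moreover have "(*) (g' xa) = (\<lambda>k. k * g' xa)" by (auto simp: fun_eq_iff)
      ultimately show "(g has_derivative (\<lambda>k. k * g' xa)) (at xa within {0..})" by simp
    qed
    show "((\<lambda>w. snd w) has_derivative (\<lambda>w. snd w)) (at (x, t) within UNIV \<times> {0..})"
      by (rule bounded_linear.has_derivative[OF bounded_linear_snd has_derivative_ident])
  qed (use t in auto)
  then show ?thesis by simp
qed

lemma Gf_joint:
  assumes t: "t \<ge> 0" and x: "x \<in> D_tilde f p s t"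
  shows "\<exists>DG. ((\<lambda>w. Gf (fst w) (snd w)) has_derivative DG) (at (x, t) within UNIV \<times> {0..})"
proof -
  note J0 = tv_joint(2)[OF sm0 t, of x]
  have Ji: "((\<lambda>w. xgrad (\<lambda>y. f i y (snd w)) (fst w)) has_derivative
           (\<lambda>w. xhess (\<lambda>y. f i y t) x *v fst w + snd w *\<^sub>R grad_xt (f i) x t)) (at (x,t) within UNIV \<times> {0..})"
    if "i \<in> {1..p}" for i using tv_joint(2)[of "f i" t x] smi that t by auto
  have Jf: "((\<lambda>w. f i (fst w) (snd w)) has_derivative
           (\<lambda>w. xgrad (\<lambda>y. f i y t) x \<bullet> fst w + snd w * tderiv (f i) x t)) (at (x,t) within UNIV \<times> {0..})"
    if "i \<in> {1..p}" for i using tv_joint(1)[of "f i" t x] smi that t by auto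
  note Jc = scalar_joint[OF cder t, of x]
  note Js = scalar_joint[OF sder t, of x]
  have cne: "c t \<noteq> 0" using cpos t by force
  have sne: "s t - f i x t \<noteq> 0" if "i \<in> {1..p}" for i using pos_D[OF x that] by simp
  show ?thesis
    unfolding Gf_def g0_def gr_def
    apply (rule exI)
    apply (rule has_derivative_add[OF J0])
    apply (rule has_derivative_scaleR)
     apply (rule has_derivative_divide[OF has_derivative_const Jc])
     apply (simp add: cne)
    apply (rule has_derivative_sum)
    apply (rule has_derivative_scaleR)
     apply (rule has_derivative_divide[OF has_derivative_const has_derivative_diff[OF Js Jf]])
      apply simp
     apply (use sne in fastforce)
    apply (erule Ji)
    done
qed

end



lemma nb: assumes "(t::real) \<ge> 0" shows "at t within {0..} \<noteq> bot"
proof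
  assume "at t within {0..} = bot"
  moreover have "at t within {t..t+1} \<le> at t within {0..}" using assms by (intro at_le) auto
  ultimately have "at t within {t..t+1} = bot" by (simp add: bot_unique)
  moreover have "at t within {t..t+1} = at_right t" by (rule at_within_Icc_at_right) simp
  ultimately show False by simp
qed

lemma mvneg: "(A::real^'n^'m) *v (- v) = - (A *v v)"
  by (rule linear_neg[OF matrix_vector_mul_linear])

lemma matrix_inv_right':
  fixes A :: "real^'n^'n"
  assumes "invertible A"
  shows "A ** matrix_inv A = mat 1"
proof -
  have "A ** matrix_inv A = mat 1 \<and> matrix_inv A ** A = mat 1"
    unfolding matrix_inv_def by (rule someI_ex[OF assms[unfolded invertible_def]])
  then show ?thesis by (rule conjunct1)
qed

context setting begin

lemma eventually_D:
  assumes t: "t \<ge> 0" and x: "x \<in> D_tilde f p s t"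
  shows "eventually (\<lambda>\<tau>. \<tau> \<in> {0..} \<longrightarrow> x \<in> D_tilde f p s \<tau>) (nhds t)"
proof -
  have "\<forall>i\<in>{1..p}. eventually (\<lambda>\<tau>. 0 < s \<tau> - f i x \<tau>) (at t within {0..})"
  proof
    fix i assume i: "i \<in> {1..p}"
    have cs: "continuous (at t within {0..}) s" using sder t by (auto intro: DERIV_continuous)
    have cf: "continuous (at t within {0..}) (\<lambda>\<tau>. f i x \<tau>)"
      using smi i t by (auto simp: tv_smooth_def intro: differentiable_imp_continuous_within)
    have "((\<lambda>\<tau>. s \<tau> - f i x \<tau>) \<longlongrightarrow> s t - f i x t) (at t within {0..})"
      using continuous_diff[OF cs cf] by (simp add: continuous_within)
    then show "eventually (\<lambda>\<tau>. 0 < s \<tau> - f i x \<tau>) (at t within {0..})"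
      by (rule order_tendstoD) (use pos_D[OF x i] in simp)
  qed
  then have "eventually (\<lambda>\<tau>. \<forall>i\<in>{1..p}. 0 < s \<tau> - f i x \<tau>) (at t within {0..})"
    by (intro eventually_ball_finite) auto
  then have "eventually (\<lambda>\<tau>. \<tau> \<noteq> t \<longrightarrow> \<tau> \<in> {0..} \<longrightarrow> (\<forall>i\<in>{1..p}. 0 < s \<tau> - f i x \<tau>)) (nhds t)"
    by (simp add: eventually_at_filter)
  then show ?thesis
    by (rule eventually_mono) (use x in \<open>auto simp: D_tilde_def\<close>)
qed

lemma grad_xt_Phi:
  assumes t: "t \<ge> 0" and x: "x \<in> D_tilde f p s t"
    and DG: "((\<lambda>w. Gf (fst w) (snd w)) has_derivative DG) (at (x, t) within UNIV \<times> {0..})"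
  shows "grad_xt (Phi_tilde f0 f p c s) x t = DG (0, 1)"
    and "Hx t x h = DG (h, 0)"
proof -
  have lin: "linear DG" using DG has_derivative_linear by blast
  have p1: "((\<lambda>\<tau>. (x, \<tau>)) has_derivative (\<lambda>k. (0, k))) (at t within {0..})"
    by (rule has_derivative_Pair[OF has_derivative_const has_derivative_ident])
  have "((\<lambda>\<tau>. Gf (fst (x, \<tau>)) (snd (x, \<tau>))) has_derivative (\<lambda>k. DG (0, k))) (at t within {0..})"
    by (rule has_derivative_in_compose[OF p1 has_derivative_subset[OF DG]]) auto
  moreover have "(\<lambda>k. DG (0, k)) = (\<lambda>k. k *\<^sub>R DG (0, 1))"
  proof
    fix k :: real
    show "DG (0, k) = k *\<^sub>R DG (0, 1)" using linear_scale[OF lin, of k "(0,1)"] by simp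
  qed
  ultimately have vd: "((\<lambda>\<tau>. Gf x \<tau>) has_vector_derivative DG (0, 1)) (at t within {0..})"
    by (simp add: has_vector_derivative_def)
  have "grad_xt (Phi_tilde f0 f p c s) x t = vector_derivative (\<lambda>\<tau>. Gf x \<tau>) (at t within {0..})"
    unfolding grad_xt_def
  proof (rule vector_derivative_cong_eq)
    show "eventually (\<lambda>\<tau>. \<tau> \<in> {0..} \<longrightarrow> xgrad (\<lambda>y. Phi_tilde f0 f p c s y \<tau>) x = Gf x \<tau>) (nhds t)"
      using eventually_D[OF t x] by (rule eventually_mono) (simp add: xgrad_Phi)
  qed (use t in simp_all)
  also have "\<dots> = DG (0, 1)"
    by (rule vector_derivative_unique_within[OF nb[OF t] vector_derivative_works[THEN iffD1, OF differentiableI_vector[OF vd]] vd])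
  finally show "grad_xt (Phi_tilde f0 f p c s) x t = DG (0, 1)" .
  have p2: "((\<lambda>y. (y, t)) has_derivative (\<lambda>h. (h, 0))) (at x)"
    by (rule has_derivative_Pair[OF has_derivative_ident has_derivative_const])
  have "((\<lambda>y. Gf (fst (y, t)) (snd (y, t))) has_derivative (\<lambda>h. DG (h, 0))) (at x within UNIV)"
    by (rule has_derivative_in_compose[OF p2 has_derivative_subset[OF DG]]) (use t in auto)
  then have gd: "((\<lambda>y. Gf y t) has_derivative (\<lambda>h. DG (h, 0))) (at x)" by simp
  have "Hx t x = (\<lambda>h. DG (h, 0))" by (rule has_derivative_unique[OF Gf_dx[OF t x] gd])
  then show "Hx t x h = DG (h, 0)" by simp
qed

end

locale traj = setting f0 f p m c s c' s'
  for f0 :: "real^'n \<Rightarrow> real \<Rightarrow> real"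
    and f :: "nat \<Rightarrow> real^'n \<Rightarrow> real \<Rightarrow> real"
    and p :: nat and m :: real
    and c s c' s' :: "real \<Rightarrow> real" +
  fixes \<sigma> :: real and P :: "real^'n^'n" and z :: "real \<Rightarrow> real^'n"
  assumes sig: "\<sigma> > 0"
    and Pge: "\<forall>v. v \<bullet> (P *v v) \<ge> \<sigma> * (norm v)\<^sup>2"
    and ode: "\<forall>t\<ge>0. (z has_vector_derivative
                 (- (matrix_inv (xhess (\<lambda>y. Phi_tilde f0 f p c s y t) (z t)) *v
                     (P *v xgrad (\<lambda>y. Phi_tilde f0 f p c s y t) (z t)
                      + grad_xt (Phi_tilde f0 f p c s) (z t) t))))
               (at t within {0..})"
    and zdom: "\<forall>t\<ge>0. z t \<in> D_tilde f p s t"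
begin

definition "gg t = Gf (z t) t"

lemma hess_inv:
  assumes t: "t \<ge> 0" and x: "x \<in> D_tilde f p s t"
  shows "xhess (\<lambda>y. Phi_tilde f0 f p c s y t) x *v (matrix_inv (xhess (\<lambda>y. Phi_tilde f0 f p c s y t) x) *v w) = w"
proof -
  let ?A = "xhess (\<lambda>y. Phi_tilde f0 f p c s y t) x"
  have "\<forall>v. ?A *v v = 0 \<longrightarrow> v = 0"
  proof (intro allI impI)
    fix v assume "?A *v v = 0"
    then have "Hx t x v = 0" using xhess_Phi[OF t x] by simp
    then have "m * (norm v)\<^sup>2 \<le> 0" using Hx_pd[OF t x, of v] by simp
    then show "v = 0" using mpos by (simp add: mult_le_0_iff)
  qed
  then have "\<exists>B. B ** ?A = mat 1" by (simp only: matrix_left_invertible_ker)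
  then have "invertible ?A" by (simp only: invertible_left_inverse)
  then have "?A ** matrix_inv ?A = mat 1" by (rule matrix_inv_right')
  then show ?thesis by (simp add: matrix_vector_mul_assoc)
qed

lemma gg_deriv:
  assumes t: "t \<ge> 0"
  shows "(gg has_vector_derivative (- (P *v gg t))) (at t within {0..})"
proof -
  define x where "x = z t"
  have x: "x \<in> D_tilde f p s t" using zdom t by (simp add: x_def)
  obtain DG where DG: "((\<lambda>w. Gf (fst w) (snd w)) has_derivative DG) (at (x, t) within UNIV \<times> {0..})"
    using Gf_joint[OF t x] by blast
  have lin: "linear DG" using DG has_derivative_linear by blast
  define zd where "zd = - (matrix_inv (xhess (\<lambda>y. Phi_tilde f0 f p c s y t) x) *v
                     (P *v xgrad (\<lambda>y. Phi_tilde f0 f p c s y t) x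
                      + grad_xt (Phi_tilde f0 f p c s) x t))"
  have zd: "(z has_derivative (\<lambda>k. k *\<^sub>R zd)) (at t within {0..})"
    using ode t unfolding zd_def x_def has_vector_derivative_def by auto
  have pth: "((\<lambda>\<tau>. (z \<tau>, \<tau>)) has_derivative (\<lambda>k. (k *\<^sub>R zd, k))) (at t within {0..})"
    by (rule has_derivative_Pair[OF zd has_derivative_ident])
  have "((\<lambda>\<tau>. Gf (fst (z \<tau>, \<tau>)) (snd (z \<tau>, \<tau>))) has_derivative (\<lambda>k. DG (k *\<^sub>R zd, k))) (at t within {0..})"
    by (rule has_derivative_in_compose[OF pth has_derivative_subset[OF DG[unfolded x_def]]]) auto
  moreover have "DG (k *\<^sub>R zd, k) = k *\<^sub>R (DG (zd, 0) + DG (0, 1))" for k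
  proof -
    have "DG (k *\<^sub>R zd, k) = k *\<^sub>R DG (zd, 1)" using linear_scale[OF lin, of k "(zd, 1)"] by simp
    also have "DG (zd, 1) = DG (zd, 0) + DG (0, 1)" using linear_add[OF lin, of "(zd,0)" "(0,1)"] by simp
    finally show ?thesis .
  qed
  moreover have "DG (zd, 0) + DG (0, 1) = - (P *v gg t)"
  proof -
    have "DG (zd, 0) = xhess (\<lambda>y. Phi_tilde f0 f p c s y t) x *v zd"
      using grad_xt_Phi(2)[OF t x DG, of zd] xhess_Phi[OF t x, of zd] by simp
    also have "\<dots> = - (P *v xgrad (\<lambda>y. Phi_tilde f0 f p c s y t) x + grad_xt (Phi_tilde f0 f p c s) x t)"
      unfolding zd_def mvneg hess_inv[OF t x] ..
    also have "\<dots> = - (P *v gg t + DG (0, 1))"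
      by (simp only: xgrad_Phi[OF t x] grad_xt_Phi(1)[OF t x DG]) (simp add: gg_def x_def)
    finally show ?thesis by simp
  qed
  ultimately have "((\<lambda>\<tau>. Gf (z \<tau>) \<tau>) has_derivative (\<lambda>k. k *\<^sub>R (- (P *v gg t)))) (at t within {0..})"
    by simp
  then show ?thesis
    unfolding has_vector_derivative_def gg_def[abs_def] .
qed

end



context setting begin

lemma stationary:
  assumes t: "t \<ge> 0" and y: "y \<in> D_tilde f p s t"
    and mn: "\<forall>x\<in>D_tilde f p s t. Phi_tilde f0 f p c s y t \<le> Phi_tilde f0 f p c s x t"
  shows "Gf y t = 0"
proof -
  have "(\<lambda>h. Gf y t \<bullet> h) = (\<lambda>v. 0)"
    by (rule differential_zero_maxmin[OF y D_open[OF t] Phi_dx[OF t y]]) (use mn in blast)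
  then have "Gf y t \<bullet> Gf y t = 0" by metis
  then show ?thesis by simp
qed

lemma dist_bound:
  assumes t: "t \<ge> 0" and x: "x \<in> D_tilde f p s t" and y: "y \<in> D_tilde f p s t"
    and g0: "Gf y t = 0"
  shows "norm (x - y) \<le> norm (Gf x t) / m"
proof -
  define d where "d = x - y"
  have inD: "y + r *\<^sub>R d \<in> D_tilde f p s t" if "0 \<le> r" "r \<le> 1" for r
  proof -
    have "y + r *\<^sub>R d = (1 - r) *\<^sub>R y + r *\<^sub>R x" by (simp add: d_def algebra_simps)
    then show ?thesis using convexD[OF D_convex[OF t] y x, of "1 - r" r] that by simp
  qed
  define ch where "ch r = Gf (y + r *\<^sub>R d) t \<bullet> d - m * (norm d)\<^sup>2 * r" for r
  have "ch 0 \<le> ch 1"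
  proof (rule DERIV_nonneg_imp_nondecreasing[of 0 1])
    fix r :: real assume r: "0 \<le> r" "r \<le> 1"
    have D1: "((\<lambda>r. Gf (y + r *\<^sub>R d) t \<bullet> d) has_real_derivative (Hx t (y + r *\<^sub>R d) d \<bullet> d)) (at r)"
      by (rule line_deriv_vec[where g="\<lambda>w. Gf w t"]) (rule Gf_dx[OF t inD[OF r]])
    have "((\<lambda>r. Gf (y + r *\<^sub>R d) t \<bullet> d - m * (norm d)\<^sup>2 * r) has_real_derivative
           (Hx t (y + r *\<^sub>R d) d \<bullet> d - m * (norm d)\<^sup>2)) (at r)"
      using D1 by (auto intro!: derivative_eq_intros)
    moreover have "m * (norm d)\<^sup>2 \<le> Hx t (y + r *\<^sub>R d) d \<bullet> d"
      using Hx_pd[OF t inD[OF r], of d] by (simp add: inner_commute)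
    ultimately show "\<exists>l. (ch has_real_derivative l) (at r) \<and> 0 \<le> l"
      unfolding ch_def[abs_def] by force
  qed simp
  then have "m * (norm d)\<^sup>2 \<le> Gf x t \<bullet> d" by (simp add: ch_def g0 d_def)
  also have "\<dots> \<le> norm (Gf x t) * norm d" by (rule norm_cauchy_schwarz)
  finally have 1: "m * (norm d)\<^sup>2 \<le> norm (Gf x t) * norm d" .
  show ?thesis
  proof (cases "d = 0")
    case True then show ?thesis using mpos by (simp add: d_def)
  next
    case False
    then have "norm d > 0" by simp
    with 1 have "m * norm d \<le> norm (Gf x t)" by (simp add: power2_eq_square)
    then show ?thesis using mpos by (simp add: d_def field_simps)
  qed
qed

end

context traj begin

lemma gg_cont: "continuous_on {0..} gg"
  using gg_deriv by (auto intro!: continuous_at_imp_continuous_on has_vector_derivative_continuous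
      simp: continuous_on_eq_continuous_within)

lemma decay:
  assumes t: "t \<ge> 0"
  shows "norm (gg t) \<le> norm (gg 0) * exp (- \<sigma> * t)"
proof -
  define \<rho> where "\<rho> \<tau> = exp (2 * \<sigma> * \<tau>) * (gg \<tau> \<bullet> gg \<tau>)" for \<tau>
  have "\<rho> t \<le> \<rho> 0"
  proof (rule DERIV_nonpos_imp_decreasing_open[OF t])
    fix \<tau> :: real assume \<tau>: "0 < \<tau>" "\<tau> < t"
    have "at \<tau> within {0..} = at \<tau>" using \<tau> by (intro at_within_interior) auto
    then have gd: "(gg has_derivative (\<lambda>k. k *\<^sub>R (- (P *v gg \<tau>)))) (at \<tau>)"
      using gg_deriv[of \<tau>] \<tau> by (simp add: has_vector_derivative_def)
    have "(\<rho> has_real_derivative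
        (exp (2 * \<sigma> * \<tau>) * (2 * \<sigma>) * (gg \<tau> \<bullet> gg \<tau>) + exp (2 * \<sigma> * \<tau>) * (2 * (gg \<tau> \<bullet> (- (P *v gg \<tau>)))))) (at \<tau>)"
      unfolding \<rho>_def has_field_derivative_def
      apply (rule has_derivative_eq_rhs)
       apply (rule derivative_intros gd)+
      apply (simp add: fun_eq_iff algebra_simps inner_commute)
      done
    moreover have "\<sigma> * (gg \<tau> \<bullet> gg \<tau>) \<le> gg \<tau> \<bullet> (P *v gg \<tau>)"
      using Pge by (simp add: power2_norm_eq_inner)
    then have "exp (2 * \<sigma> * \<tau>) * (2 * \<sigma>) * (gg \<tau> \<bullet> gg \<tau>) + exp (2 * \<sigma> * \<tau>) * (2 * (gg \<tau> \<bullet> (- (P *v gg \<tau>)))) \<le> 0"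
    proof -
      assume a: "\<sigma> * (gg \<tau> \<bullet> gg \<tau>) \<le> gg \<tau> \<bullet> (P *v gg \<tau>)"
      have "exp (2 * \<sigma> * \<tau>) * (2 * \<sigma>) * (gg \<tau> \<bullet> gg \<tau>) + exp (2 * \<sigma> * \<tau>) * (2 * (gg \<tau> \<bullet> (- (P *v gg \<tau>))))
         = (2 * exp (2 * \<sigma> * \<tau>)) * (\<sigma> * (gg \<tau> \<bullet> gg \<tau>) - gg \<tau> \<bullet> (P *v gg \<tau>))"
        by (simp only: inner_minus_right) (simp add: algebra_simps)
      also have "\<dots> \<le> 0" by (rule mult_nonneg_nonpos) (use a in auto)
      finally show ?thesis .
    qed
    ultimately show "\<exists>y. (\<rho> has_real_derivative y) (at \<tau>) \<and> y \<le> 0"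
      by blast
  next
    show "continuous_on {0..t} \<rho>"
      unfolding \<rho>_def
      by (intro continuous_intros continuous_on_subset[OF gg_cont]) auto
  qed
  then have "exp (2 * \<sigma> * t) * (norm (gg t))\<^sup>2 \<le> (norm (gg 0))\<^sup>2"
    by (simp add: \<rho>_def power2_norm_eq_inner)
  note A = this
  have e: "exp (- \<sigma> * t) ^ 2 * exp (2 * \<sigma> * t) = 1"
  proof -
    have "exp (- \<sigma> * t) ^ 2 * exp (2 * \<sigma> * t) = exp (- \<sigma> * t + (- \<sigma> * t) + 2 * \<sigma> * t)"
      by (simp only: exp_add power2_eq_square)
    also have "- \<sigma> * t + (- \<sigma> * t) + 2 * \<sigma> * t = 0" by simp
    finally show ?thesis by simp
  qed
  have "(norm (gg t))\<^sup>2 = (exp (- \<sigma> * t) ^ 2 * exp (2 * \<sigma> * t)) * (norm (gg t))\<^sup>2"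
    by (simp only: e mult_1)
  also have "\<dots> = exp (- \<sigma> * t) ^ 2 * (exp (2 * \<sigma> * t) * (norm (gg t))\<^sup>2)"
    by (rule mult.assoc)
  also have "\<dots> \<le> exp (- \<sigma> * t) ^ 2 * (norm (gg 0))\<^sup>2"
    by (rule mult_left_mono[OF A]) simp
  also have "\<dots> = (norm (gg 0) * exp (- \<sigma> * t))\<^sup>2"
    by (simp only: power_mult_distrib mult.commute)
  finally have "(norm (gg t))\<^sup>2 \<le> (norm (gg 0) * exp (- \<sigma> * t))\<^sup>2" .
  then show ?thesis
    by (rule power2_le_imp_le) simp
qed

end



context setting begin

lemma f0_lower:
  assumes t: "t \<ge> 0"
  shows "f0 x1 t - norm (g0 t x1) * norm (y - x1) + m / 2 * (norm (y - x1))\<^sup>2 \<le> f0 y t"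
proof -
  have "f0 x1 t + g0 t x1 \<bullet> (y - x1) + m / 2 * (norm (y - x1))\<^sup>2 \<le> f0 (x1 + (y - x1)) t"
  proof (rule strong_lower[where f="\<lambda>y. f0 y t" and gr="g0 t" and L="\<lambda>y h. xhess (\<lambda>y. f0 y t) y *v h"])
    show "\<And>y. ((\<lambda>y. f0 y t) has_derivative (\<bullet>) (g0 t y)) (at y)"
      unfolding g0_def by (rule tv_dx[OF sm0 t])
    show "\<And>y. (g0 t has_derivative (\<lambda>h. xhess (\<lambda>y. f0 y t) y *v h)) (at y)"
      unfolding g0_def[abs_def] by (rule tv_dxx[OF sm0 t])
    show "\<And>ya. m * (norm (y - x1))\<^sup>2 \<le> (xhess (\<lambda>y. f0 y t) ya *v (y - x1)) \<bullet> (y - x1)"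
      using strong t by (simp add: inner_commute)
  qed
  moreover have "- (norm (g0 t x1) * norm (y - x1)) \<le> g0 t x1 \<bullet> (y - x1)"
    using Cauchy_Schwarz_ineq2[of "g0 t x1" "y - x1"] by (simp add: abs_le_iff)
  ultimately show ?thesis by simp
qed

lemma ln_upper:
  assumes t: "t \<ge> 0" and y: "y \<in> D_tilde f p s t" and i: "i \<in> {1..p}"
  shows "ln (s t - f i y t) \<le> (s t - f i x1 t) + norm (gr i t x1) * norm (y - x1)"
proof -
  have sm: "tv_smooth (f i)" using smi i by auto
  have tg: "f i x1 t + gr i t x1 \<bullet> (y - x1) \<le> f i y t"
    by (rule convex_tangent2[where f="\<lambda>y. f i y t" and gr="gr i t"])
       (use conv i t tv_dx[OF sm t] in \<open>auto simp: gr_def\<close>)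
  have "ln (s t - f i y t) \<le> s t - f i y t - 1" by (rule ln_le_minus_one) (use pos_D[OF y i] in simp)
  moreover have "- (gr i t x1 \<bullet> (y - x1)) \<le> norm (gr i t x1) * norm (y - x1)"
    using Cauchy_Schwarz_ineq2[of "gr i t x1" "y - x1"] by (simp add: abs_le_iff)
  ultimately show ?thesis using tg by linarith
qed

lemma Phi_cont_D:
  assumes t: "t \<ge> 0" and "E \<subseteq> D_tilde f p s t"
  shows "continuous_on E (\<lambda>y. Phi_tilde f0 f p c s y t)"
  using assms Phi_dx[OF t]
  by (intro continuous_at_imp_continuous_on) (blast intro: has_derivative_continuous)

lemma min_exists:
  assumes t: "t \<ge> 0" and x1: "x1 \<in> D_tilde f p s t"
  shows "\<exists>y\<in>D_tilde f p s t. \<forall>x\<in>D_tilde f p s t. Phi_tilde f0 f p c s y t \<le> Phi_tilde f0 f p c s x t"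
proof -
  define \<Phi> where "\<Phi> y = Phi_tilde f0 f p c s y t" for y
  define K where "K = 1 / c t"
  have Kpos: "K > 0" using cpos t by (simp add: K_def)
  define Aln where "Aln = (\<Sum>i=1..p. s t - f i x1 t)"
  define Bln where "Bln = (\<Sum>i=1..p. norm (gr i t x1))"
  have Bln0: "Bln \<ge> 0" unfolding Bln_def by (intro sum_nonneg) auto
  define B where "B = norm (g0 t x1) + K * Bln"
  have B0: "B \<ge> 0" using Bln0 Kpos by (simp add: B_def)
  define A where "A = f0 x1 t - K * Aln - \<Phi> x1"
  define R where "R = max 1 (2 * (B + \<bar>A\<bar> + 1) / m)"
  have R1: "R \<ge> 1" by (simp add: R_def)
  have PhiD: "\<Phi> y = f0 y t - K * (\<Sum>i=1..p. ln (s t - f i y t))" for y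
    by (simp add: \<Phi>_def Phi_tilde_def K_def)
  have sumln: "(\<Sum>i=1..p. ln (s t - f i y t)) \<le> Aln + Bln * norm (y - x1)" if y: "y \<in> D_tilde f p s t" for y
  proof -
    have "(\<Sum>i=1..p. ln (s t - f i y t)) \<le> (\<Sum>i=1..p. (s t - f i x1 t) + norm (gr i t x1) * norm (y - x1))"
      by (intro sum_mono ln_upper[OF t y]) auto
    also have "\<dots> = Aln + Bln * norm (y - x1)"
      by (simp add: Aln_def Bln_def sum.distrib sum_distrib_right)
    finally show ?thesis .
  qed
  have low1: "\<Phi> y \<ge> A + \<Phi> x1 - B * norm (y - x1) + m / 2 * (norm (y - x1))\<^sup>2" if y: "y \<in> D_tilde f p s t" for y
  proof -
    have "K * (\<Sum>i=1..p. ln (s t - f i y t)) \<le> K * (Aln + Bln * norm (y - x1))"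
      using sumln[OF y] Kpos by (intro mult_left_mono) auto
    then show ?thesis using f0_lower[OF t, of x1 y] unfolding PhiD A_def B_def by (simp add: algebra_simps)
  qed
  have far: "\<Phi> y > \<Phi> x1" if y: "y \<in> D_tilde f p s t" and r: "norm (y - x1) > R" for y
  proof -
    define r where "r = norm (y - x1)"
    have r1: "r \<ge> 1" and r2: "r \<ge> 2 * (B + \<bar>A\<bar> + 1) / m" using r R1 unfolding r_def R_def by auto
    have "m * r \<ge> 2 * (B + \<bar>A\<bar> + 1)" using r2 mpos by (simp add: field_simps)
    then have u: "m * r / 2 \<ge> B + \<bar>A\<bar> + 1" by simp
    have 1: "(m * r / 2) * r \<ge> (B + \<bar>A\<bar> + 1) * r" by (rule mult_right_mono[OF u]) (use r1 in simp)
    have 2: "m / 2 * r\<^sup>2 = (m * r / 2) * r" by (simp add: power2_eq_square)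
    have 3: "(B + \<bar>A\<bar> + 1) * r = B * r + (\<bar>A\<bar> + 1) * r" by (simp only: distrib_right)
    have 4: "(\<bar>A\<bar> + 1) * r \<ge> (\<bar>A\<bar> + 1) * 1" by (rule mult_left_mono) (use r1 in auto)
    have 5: "- A \<le> \<bar>A\<bar>" by (rule abs_ge_minus_self)
    have "A - B * r + m / 2 * r\<^sup>2 > 0"
    proof -
      obtain Q Y Z BR where q: "Q = m * r / 2 * r" and y: "Y = (B + \<bar>A\<bar> + 1) * r"
        and z: "Z = (\<bar>A\<bar> + 1) * r" and br: "BR = B * r" by blast
      have "Y \<le> Q" "Y = BR + Z" "\<bar>A\<bar> + 1 \<le> Z" using 1 3 4 q y z br by simp_all
      then have "0 < A - BR + Q" using 5 by linarith
      then show ?thesis using 2 q br by (simp add: power2_eq_square mult.assoc)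
    qed
    then show ?thesis using low1[OF y] unfolding r_def by linarith
  qed
  define Mtot where "Mtot = (\<Sum>i=1..p. \<bar>s t - f i x1 t\<bar> + norm (gr i t x1) * R)"
  define L where "L = \<bar>\<Phi> x1 - f0 x1 t + norm (g0 t x1) * R + K * Mtot\<bar> / K + 1"
  define \<delta> where "\<delta> = exp (- L)"
  have dpos: "\<delta> > 0" by (simp add: \<delta>_def)
  have near: "\<Phi> y > \<Phi> x1" if y: "y \<in> D_tilde f p s t" and r: "norm (y - x1) \<le> R"
     and j: "j \<in> {1..p}" and fj: "s t - f j y t < \<delta>" for y j
  proof -
    have lnj: "ln (s t - f j y t) < - L"
    proof -
      have "ln (s t - f j y t) < ln \<delta>"
        using fj pos_D[OF y j] dpos by (subst ln_less_cancel_iff) auto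
      then show ?thesis by (simp add: \<delta>_def)
    qed
    have bi: "ln (s t - f i y t) \<le> \<bar>s t - f i x1 t\<bar> + norm (gr i t x1) * R" if i: "i \<in> {1..p}" for i
    proof -
      have "norm (gr i t x1) * norm (y - x1) \<le> norm (gr i t x1) * R" using r by (intro mult_left_mono) auto
      then show ?thesis using ln_upper[OF t y i, of x1] abs_ge_self[of "s t - f i x1 t"] by linarith
    qed
    have "(\<Sum>i=1..p. ln (s t - f i y t)) = ln (s t - f j y t) + (\<Sum>i\<in>{1..p} - {j}. ln (s t - f i y t))"
      using j by (simp add: sum.remove)
    also have "(\<Sum>i\<in>{1..p} - {j}. ln (s t - f i y t)) \<le> (\<Sum>i\<in>{1..p} - {j}. \<bar>s t - f i x1 t\<bar> + norm (gr i t x1) * R)"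
      by (intro sum_mono bi) auto
    also have "\<dots> \<le> Mtot" unfolding Mtot_def
      by (rule sum_mono2) (use R1 in \<open>auto intro!: add_nonneg_nonneg mult_nonneg_nonneg\<close>)
    finally have sl: "(\<Sum>i=1..p. ln (s t - f i y t)) < - L + Mtot" using lnj by linarith
    have "K * (\<Sum>i=1..p. ln (s t - f i y t)) < K * (- L + Mtot)"
      using sl Kpos by simp
    moreover have "f0 y t \<ge> f0 x1 t - norm (g0 t x1) * R"
    proof -
      have "norm (g0 t x1) * norm (y - x1) \<le> norm (g0 t x1) * R" using r by (intro mult_left_mono) auto
      then show ?thesis using f0_lower[OF t, of x1 y] mpos by (smt (verit) zero_le_power2 mult_nonneg_nonneg divide_nonneg_nonneg)
    qed
    moreover have "K * L > \<Phi> x1 - f0 x1 t + norm (g0 t x1) * R + K * Mtot"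
    proof -
      have "K * L = \<bar>\<Phi> x1 - f0 x1 t + norm (g0 t x1) * R + K * Mtot\<bar> + K"
        using Kpos by (simp add: L_def field_simps)
      then show ?thesis using Kpos by linarith
    qed
    ultimately show ?thesis unfolding PhiD[of y] by (simp add: algebra_simps)
  qed
  define E where "E = cball x1 R \<inter> (\<Inter>i\<in>{1..p}. {y. f i y t \<le> s t - \<delta>})"
  have ED: "E \<subseteq> D_tilde f p s t"
  proof
    fix x assume "x \<in> E"
    then have "\<forall>i\<in>{1..p}. f i x t \<le> s t - \<delta>" by (simp add: E_def)
    then show "x \<in> D_tilde f p s t" using dpos by (fastforce simp: D_tilde_def)
  qed
  have cE: "compact E"
    unfolding E_def
    by (intro compact_Int_closed compact_cball closed_INT ballI closed_Collect_le fi_cont continuous_on_const t) auto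
  have x1E: "x1 \<in> E"
  proof -
    have "f i x1 t \<le> s t - \<delta>" if i: "i \<in> {1..p}" for i
    proof (rule ccontr)
      assume "\<not> f i x1 t \<le> s t - \<delta>"
      then have "s t - f i x1 t < \<delta>" by simp
      from near[OF x1 _ i this] R1 show False by simp
    qed
    then show ?thesis using R1 by (auto simp: E_def)
  qed
  obtain y where yE: "y \<in> E" and ymin: "\<forall>x\<in>E. \<Phi> y \<le> \<Phi> x"
    using continuous_attains_inf[OF cE _ Phi_cont_D[OF t ED]] x1E unfolding \<Phi>_def by blast
  show ?thesis
  proof (intro bexI ballI)
    show "y \<in> D_tilde f p s t" using yE ED by auto
    fix x assume x: "x \<in> D_tilde f p s t"
    show "Phi_tilde f0 f p c s y t \<le> Phi_tilde f0 f p c s x t"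
    proof (cases "x \<in> E")
      case True then show ?thesis using ymin unfolding \<Phi>_def by auto
    next
      case False
      have "\<Phi> x > \<Phi> x1"
      proof (cases "norm (x - x1) \<le> R")
        case True
        with False obtain i where i: "i \<in> {1..p}" and "\<not> f i x t \<le> s t - \<delta>"
          by (auto simp: E_def dist_norm norm_minus_commute)
        then have "s t - f i x t < \<delta>" by simp
        then show ?thesis using near[OF x True i] by simp
      next
        case False then show ?thesis using far[OF x] by simp
      qed
      moreover have "\<Phi> y \<le> \<Phi> x1" using ymin x1E by auto
      ultimately show ?thesis unfolding \<Phi>_def by simp
    qed
  qed
qed

end



lemma (in setting) zstar_props:
  assumes t: "t \<ge> 0" and x1: "x1 \<in> D_tilde f p s t"
  shows "z_star f0 f p c s t \<in> D_tilde f p s t"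
    and "\<forall>x\<in>D_tilde f p s t. Phi_tilde f0 f p c s (z_star f0 f p c s t) t \<le> Phi_tilde f0 f p c s x t"
proof -
  obtain y where "y \<in> D_tilde f p s t" "\<forall>x\<in>D_tilde f p s t. Phi_tilde f0 f p c s y t \<le> Phi_tilde f0 f p c s x t"
    using min_exists[OF t x1] by blast
  then have ex: "\<exists>y. is_arg_min (\<lambda>x. Phi_tilde f0 f p c s x t) (\<lambda>x. x \<in> D_tilde f p s t) y"
    unfolding is_arg_min_def by (auto simp: not_less)
  have "is_arg_min (\<lambda>x. Phi_tilde f0 f p c s x t) (\<lambda>x. x \<in> D_tilde f p s t) (z_star f0 f p c s t)"
    unfolding z_star_def arg_min_on_def arg_min_def by (rule someI_ex[OF ex])
  then show "z_star f0 f p c s t \<in> D_tilde f p s t"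
    and "\<forall>x\<in>D_tilde f p s t. Phi_tilde f0 f p c s (z_star f0 f p c s t) t \<le> Phi_tilde f0 f p c s x t"
    unfolding is_arg_min_def by (auto simp: not_less)
qed

theorem lemma5:
  fixes f0 :: "real^'n \<Rightarrow> real \<Rightarrow> real"
    and f :: "nat \<Rightarrow> real^'n \<Rightarrow> real \<Rightarrow> real"
    and p :: nat and m :: real
    and c s c' s' :: "real \<Rightarrow> real"
    and c0 s0 \<epsilon> \<sigma> :: real
    and x0 :: "real^'n"
    and P :: "real^'n^'n"
    and z :: "real \<Rightarrow> real^'n"
  assumes p_pos: "p \<ge> 1"
    and A1_f0: "tv_smooth f0"
    and A1_fi: "\<forall>i\<in>{1..p}. tv_smooth (f i)"
    and A1_m: "m > 0"
    and A1_strong: "\<forall>t\<ge>0. \<forall>x v. v \<bullet> (xhess (\<lambda>y. f0 y t) x *v v) \<ge> m * (norm v)\<^sup>2"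
    and A1_convex: "\<forall>i\<in>{1..p}. \<forall>t\<ge>0. convex_on UNIV (\<lambda>x. f i x t)"
    and c_pos: "\<forall>t\<ge>0. c t > 0"
    and c_deriv: "\<forall>t\<ge>0. (c has_real_derivative c' t) (at t within {0..})"
    and c'_cont: "continuous_on {0..} c'"
    and s_nonneg: "\<forall>t\<ge>0. s t \<ge> 0"
    and s_deriv: "\<forall>t\<ge>0. (s has_real_derivative s' t) (at t within {0..})"
    and s'_cont: "continuous_on {0..} s'"
    and c0_def: "c 0 = c0"
    and s0_def: "s 0 = s0"
    and eps_pos: "\<epsilon> > 0"
    and s0_choice: "s0 = (if Max ((\<lambda>i. f i x0 0) ` {1..p}) \<le> 0 then 0
                          else Max ((\<lambda>i. f i x0 0) ` {1..p}) + \<epsilon>)"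
    and P_sym: "transpose P = P"
    and P_pd: "\<forall>v. v \<noteq> 0 \<longrightarrow> v \<bullet> (P *v v) > 0"
    and sigma_pos: "\<sigma> > 0"
    and P_ge: "\<forall>v. v \<bullet> (P *v v) \<ge> \<sigma> * (norm v)\<^sup>2"
    and z_ode: "\<forall>t\<ge>0. (z has_vector_derivative
                 (- (matrix_inv (xhess (\<lambda>y. Phi_tilde f0 f p c s y t) (z t)) *v
                     (P *v xgrad (\<lambda>y. Phi_tilde f0 f p c s y t) (z t)
                      + grad_xt (Phi_tilde f0 f p c s) (z t) t))))
               (at t within {0..})"
    and z_init: "z 0 = x0"
    and z_dom: "\<forall>t\<ge>0. z t \<in> D_tilde f p s t"
  shows "\<exists>C\<ge>0. \<forall>t\<ge>0. norm (z t - z_star f0 f p c s t) \<le> C * exp (- \<sigma> * t)"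
proof -
  interpret traj f0 f p m c s c' s' \<sigma> P z
    by unfold_locales (use A1_f0 A1_fi A1_m A1_strong A1_convex c_pos c_deriv s_deriv sigma_pos P_ge z_ode z_dom in auto)
  show ?thesis
  proof (intro exI conjI allI impI)
    show "norm (gg 0) / m \<ge> 0" using mpos by simp
    fix t :: real assume t: "t \<ge> 0"
    have zt: "z t \<in> D_tilde f p s t" using z_dom t by auto
    note zs = zstar_props[OF t zt]
    have "Gf (z_star f0 f p c s t) t = 0" by (rule stationary[OF t zs])
    then have "norm (z t - z_star f0 f p c s t) \<le> norm (Gf (z t) t) / m"
      by (rule dist_bound[OF t zt zs(1)])
    also have "\<dots> = norm (gg t) / m" by (simp add: gg_def)
    also have "\<dots> \<le> norm (gg 0) * exp (- \<sigma> * t) / m"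
      using decay[OF t] mpos by (simp add: divide_right_mono)
    finally show "norm (z t - z_star f0 f p c s t) \<le> norm (gg 0) / m * exp (- \<sigma> * t)" by simp
  qed
qed


end
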